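(* Let $\sigma$ be a permutation of length $m$ with exactly one descent and exactly $i$ adjacency pairs. Then the letter $m$ lies on the same side of the descent as the letter $1$ in $\sigma$ if and only if $m-i$ is odd.
   Context: A permutation of length $m$ is an arrangement $\sigma_1\cdots\sigma_m$ of $1,\dots,m$. A descent is an index $d$ with $\sigma_d>\sigma_{d+1}$; if $\sigma$ has exactly one descent at $d$, the positions $1,\dots,d$ are before the descent and $d+1,\dots,m$ after it, and two letters are on the same side of the descent if their positions are both $\le d$ or both $>d$. An adjacency pair is an index $j$ with $\sigma_{j+1}=\sigma_j+1$; the number of adjacency pairs is the number of such indices (so a run of $k$ consecutive increasing values in consecutive positions contributes $k-1$). *)

theory Defs
  imports Main
begin

(* A permutation of length m is a list sigma_1 ... sigma_m (stored 0-based: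
   sigma_k = s ! (k-1)) that is an arrangement of 1..m. *)
definition is_perm :: "nat \<Rightarrow> nat list \<Rightarrow> bool" where
  "is_perm m s \<longleftrightarrow> length s = m \<and> distinct s \<and> set s = {1..m}"

definition descents :: "nat list \<Rightarrow> nat set" where
  "descents s = {d. 1 \<le> d \<and> d < length s \<and> s ! (d - 1) > s ! d}"

definition adjacency_pairs :: "nat list \<Rightarrow> nat" where
  "adjacency_pairs s = card {j. 1 \<le> j \<and> j < length s \<and> s ! j = s ! (j - 1) + 1}"

definition pos :: "nat list \<Rightarrow> nat \<Rightarrow> nat" where
  "pos s a = (THE k. 1 \<le> k \<and> k \<le> length s \<and> s ! (k - 1) = a)"

definition same_side :: "nat list \<Rightarrow> nat \<Rightarrow> nat \<Rightarrow> nat \<Rightarrow> bool" where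
  "same_side s d a b \<longleftrightarrow> (pos s a \<le> d \<longleftrightarrow> pos s b \<le> d)"

end

theory Submission
  imports Defs
begin

lemma parity_switch:
  fixes S :: "nat \<Rightarrow> bool"
  shows "(S 1 = S (Suc n)) \<longleftrightarrow> even (card {k\<in>{1..n}. S k \<noteq> S (Suc k)})"
proof (induction n)
  case 0
  then show ?case by simp
next
  case (Suc n)
  have eq: "{k\<in>{1..Suc n}. S k \<noteq> S (Suc k)} = {k\<in>{1..n}. S k \<noteq> S (Suc k)} \<union>
      (if S (Suc n) \<noteq> S (Suc (Suc n)) then {Suc n} else {})"
    by (auto simp: le_Suc_eq)
  show ?case
  proof (cases "S (Suc n) \<noteq> S (Suc (Suc n))")
    case True
    have "card {k\<in>{1..Suc n}. S k \<noteq> S (Suc k)} = Suc (card {k\<in>{1..n}. S k \<noteq> S (Suc k)})"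
      unfolding eq using True by simp
    then show ?thesis using Suc True by auto
  next
    case False
    have "card {k\<in>{1..Suc n}. S k \<noteq> S (Suc k)} = card {k\<in>{1..n}. S k \<noteq> S (Suc k)}"
      unfolding eq using False by simp
    then show ?thesis using Suc False by auto
  qed
qed

lemma block_mono:
  fixes s :: "nat list"
  assumes "\<And>t. lo \<le> t \<Longrightarrow> Suc t < hi \<Longrightarrow> s ! t < s ! Suc t"
  shows "lo \<le> a \<Longrightarrow> a < b \<Longrightarrow> b < hi \<Longrightarrow> s ! a < s ! b"
proof (induction b)
  case 0
  then show ?case by simp
next
  case (Suc b)
  show ?case
  proof (cases "a = b")
    case True
    then show ?thesis using assms Suc.prems by auto
  next
    case False
    then have "s ! a < s ! b" using Suc by auto
    also have "s ! b < s ! Suc b" using assms Suc.prems False by auto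
    finally show ?thesis .
  qed
qed

theorem mainTheorem11:
  fixes m i d :: nat and \<sigma> :: "nat list"
  assumes "is_perm m \<sigma>"
    and "descents \<sigma> = {d}"
    and "adjacency_pairs \<sigma> = i"
  shows "same_side \<sigma> d m 1 \<longleftrightarrow> odd (m - i)"
proof -
  have len: "length \<sigma> = m" and dist: "distinct \<sigma>" and st: "set \<sigma> = {1..m}"
    using assms(1) by (auto simp: is_perm_def)
  have dd: "d \<in> descents \<sigma>" using assms(2) by auto
  then have d1: "1 \<le> d" and dm: "d < m" and ddesc: "\<sigma> ! (d - 1) > \<sigma> ! d"
    using len by (auto simp: descents_def)
  have nodesc: "\<sigma> ! t < \<sigma> ! Suc t" if "Suc t < m" "Suc t \<noteq> d" for t
  proof -
    have "Suc t \<notin> descents \<sigma>" using assms(2) that by auto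
    then have "\<not> \<sigma> ! t > \<sigma> ! Suc t" using that len by (auto simp: descents_def)
    moreover have "\<sigma> ! t \<noteq> \<sigma> ! Suc t" using dist that len nth_eq_iff_index_eq by fastforce
    ultimately show ?thesis by simp
  qed
  have mono: "\<sigma> ! a < \<sigma> ! b" if "a < b" "b < m" "(a < d) = (b < d)" for a b
  proof (cases "b < d")
    case True
    have "\<And>t. 0 \<le> t \<Longrightarrow> Suc t < d \<Longrightarrow> \<sigma> ! t < \<sigma> ! Suc t" using nodesc dm by auto
    from block_mono[of 0 d \<sigma>, OF this] show ?thesis using that True by auto
  next
    case False
    have "\<And>t. d \<le> t \<Longrightarrow> Suc t < m \<Longrightarrow> \<sigma> ! t < \<sigma> ! Suc t" using nodesc by auto
    from block_mono[of d m \<sigma>, OF this] show ?thesis using that False by auto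
  qed
  have posnth: "pos \<sigma> (\<sigma> ! p) = Suc p" if "p < m" for p
    unfolding pos_def
  proof (rule the_equality)
    show "1 \<le> Suc p \<and> Suc p \<le> length \<sigma> \<and> \<sigma> ! (Suc p - 1) = \<sigma> ! p" using that len by auto
  next
    fix k assume "1 \<le> k \<and> k \<le> length \<sigma> \<and> \<sigma> ! (k - 1) = \<sigma> ! p"
    then have "k - 1 = p" using dist that len nth_eq_iff_index_eq[of \<sigma> "k-1" p] by auto
    then show "k = Suc p" using \<open>1 \<le> k \<and> _\<close> by auto
  qed
  have ex: "\<exists>p<m. \<sigma> ! p = a" if "a \<in> {1..m}" for a
    using that st len by (metis in_set_conv_nth)
  define S where "S k = (pos \<sigma> k \<le> d)" for k
  define J where "J = {j. 1 \<le> j \<and> j < length \<sigma> \<and> \<sigma> ! j = \<sigma> ! (j - 1) + 1}"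
  define K where "K = {k\<in>{1..m-1}. S k = S (Suc k)}"
  define K' where "K' = {k\<in>{1..m-1}. S k \<noteq> S (Suc k)}"
  have inj: "inj_on (\<lambda>j. \<sigma> ! (j - 1)) J"
  proof (rule inj_onI)
    fix x y assume "x \<in> J" "y \<in> J" "\<sigma> ! (x - 1) = \<sigma> ! (y - 1)"
    then have "x - 1 = y - 1" using dist len nth_eq_iff_index_eq[of \<sigma> "x-1" "y-1"]
      by (auto simp: J_def)
    then show "x = y" using \<open>x \<in> J\<close> \<open>y \<in> J\<close> by (auto simp: J_def)
  qed
  have img: "(\<lambda>j. \<sigma> ! (j - 1)) ` J = K"
  proof
    show "(\<lambda>j. \<sigma> ! (j - 1)) ` J \<subseteq> K"
    proof
      fix k assume "k \<in> (\<lambda>j. \<sigma> ! (j - 1)) ` J"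
      then obtain j where j: "1 \<le> j" "j < m" "\<sigma> ! j = Suc (\<sigma> ! (j - 1))" and k: "k = \<sigma> ! (j - 1)"
        by (auto simp: J_def len)
      have jd: "j \<noteq> d" using j ddesc by auto
      have jm: "j - 1 < length \<sigma>" "j < length \<sigma>" using j(1,2) len by arith+
      have "\<sigma> ! (j-1) \<in> {1..m}" "\<sigma> ! j \<in> {1..m}" using nth_mem[OF jm(1)] nth_mem[OF jm(2)] st by blast+
      then have r: "1 \<le> k" "Suc k \<le> m" unfolding k using j(3) by auto
      have p1: "pos \<sigma> k = j" using posnth[of "j-1"] j k by auto
      have p2: "pos \<sigma> (Suc k) = Suc j" using posnth[of j] j k by auto
      have "S k = S (Suc k)" unfolding S_def p1 p2 using jd by auto
      then show "k \<in> K" using r by (auto simp: K_def)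
    qed
  next
    show "K \<subseteq> (\<lambda>j. \<sigma> ! (j - 1)) ` J"
    proof
      fix k assume "k \<in> K"
      then have r: "1 \<le> k" "Suc k \<le> m" and sk: "S k = S (Suc k)" by (auto simp: K_def)
      obtain p where p: "p < m" "\<sigma> ! p = k" using ex r by force
      obtain q where q: "q < m" "\<sigma> ! q = Suc k" using ex r by force
      have side: "(p < d) = (q < d)" using sk posnth p q unfolding S_def by fastforce
      have "p < q"
      proof (rule ccontr)
        assume "\<not> p < q"
        moreover have "p \<noteq> q" using p q by auto
        ultimately have "\<sigma> ! q < \<sigma> ! p" using mono[of q p] p side by auto
        then show False using p q by auto
      qed
      have "q = Suc p"
      proof (rule ccontr)
        assume "q \<noteq> Suc p"
        then have "Suc p < q" using \<open>p < q\<close> by auto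
        have s1: "(p < d) = (Suc p < d)" using side \<open>Suc p < q\<close> by auto
        have "\<sigma> ! p < \<sigma> ! Suc p" using mono[of p "Suc p"] s1 q \<open>Suc p < q\<close> by auto
        moreover have "\<sigma> ! Suc p < \<sigma> ! q" using mono[of "Suc p" q] s1 side q \<open>Suc p < q\<close> by auto
        ultimately show False using p q by auto
      qed
      then have "q \<in> J" "k = \<sigma> ! (q - 1)" using p q len by (auto simp: J_def)
      then show "k \<in> (\<lambda>j. \<sigma> ! (j - 1)) ` J" by blast
    qed
  qed
  have "i = card J" using assms(3) unfolding adjacency_pairs_def J_def by simp
  also have "\<dots> = card ((\<lambda>j. \<sigma> ! (j - 1)) ` J)" using card_image[OF inj] by simp
  finally have iK: "i = card K" using img by simp
  have "card K + card K' = m - 1"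
  proof -
    have "K \<union> K' = {1..m-1}" "K \<inter> K' = {}" by (auto simp: K_def K'_def)
    then show ?thesis using card_Un_disjoint[of K K'] by (simp add: K_def K'_def)
  qed
  moreover have "same_side \<sigma> d m 1 \<longleftrightarrow> even (card K')"
  proof -
    have "(S 1 = S (Suc (m - 1))) \<longleftrightarrow> even (card K')"
      using parity_switch[of S "m - 1"] by (simp add: K'_def)
    then show ?thesis using dm unfolding same_side_def S_def by auto
  qed
  ultimately show ?thesis
  proof -
    assume a: "card K + card K' = m - 1" and b: "same_side \<sigma> d m 1 \<longleftrightarrow> even (card K')"
    have "m - i = Suc (card K')" using a iK dm by linarith
    then show ?thesis using b by simp
  qed
qed

end
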